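(* For cake instances, Generalized PAV does not satisfy cake EJR: there exists a cake instance and an allocation selected by Generalized PAV that violates cake EJR.
   Context: Model: There is a set of agents $N=\{1,\dots,n\}$. The resource $R$ consists of a cake $C=[0,c]$ for a real $c\ge 0$ and a set of indivisible goods $G=\{g_1,\dots,g_m\}$ for an integer $m\ge 0$, with $\max(c,m)>0$. A piece of cake is a union of finitely many disjoint closed subintervals of $C$; its length $\ell(\cdot)$ is the sum of the lengths of its intervals. A bundle $R'=(C',G')$ consists of a piece of cake $C'\subseteq C$ and a set $G'\subseteq G$; its size is $s(R')=\ell(C')+|G'|$. Each agent $i$ approves a bundle $R_i=(C_i,G_i)$, and her utility for a bundle $R'$ is $u_i(R')=\ell(C_i\cap C')+|G_i\cap G'|$. A parameter $\alpha\in(0,c+m]$ is given; an allocation is a bundle $A$ with $s(A)\le\alpha$. A cake instance is one with $m=0$. For a real $t>0$, $N^*\subseteq N$ is $t$-cohesive if $|N^*|\ge t n/\alpha$ and $s(\bigcap_{i\in N^*}R_i)\ge t$. Cake EJR: an allocation $A$ satisfies cake EJR if for every real $t>0$ and every $t$-cohesive group $N^*$, some $j\in N^*$ has $u_j(A)\ge t$. Generalized harmonic numbers: $H_x\coloneqq\sum_{k=1}^\infty\frac{x}{k(x+k)}$ for real $x\ge0$. Generalized PAV selects an allocation $R'$ with $s(R')\le\alpha$ maximizing $\sum_{i\in N}H_{u_i(R')}$. *)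

theory Defs
  imports "HOL-Analysis.Analysis"
begin

definition is_piece :: "real \<Rightarrow> real set \<Rightarrow> bool" where
  "is_piece c P \<longleftrightarrow>
     (\<exists>I :: (real \<times> real) set. finite I \<and>
        (\<forall>(a,b)\<in>I. 0 \<le> a \<and> a \<le> b \<and> b \<le> c) \<and>
        disjoint_family_on (\<lambda>(a,b). {a..b}) I \<and>
        P = (\<Union>(a,b)\<in>I. {a..b}))"

text \<open>Length of a piece of cake (sum of the interval lengths = Lebesgue measure).\<close>
definition len :: "real set \<Rightarrow> real" where
  "len P = measure lborel P"

definition cake_util :: "real set \<Rightarrow> real set \<Rightarrow> real" where
  "cake_util Ri A = len (Ri \<inter> A)"

definition gen_harmonic :: "real \<Rightarrow> real" where
  "gen_harmonic x = (\<Sum>k. x / (real (Suc k) * (x + real (Suc k))))"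

definition is_cake_allocation :: "real \<Rightarrow> real \<Rightarrow> real set \<Rightarrow> bool" where
  "is_cake_allocation c \<alpha> A \<longleftrightarrow> is_piece c A \<and> len A \<le> \<alpha>"

definition gpav_outcome :: "nat \<Rightarrow> real \<Rightarrow> real \<Rightarrow> (nat \<Rightarrow> real set) \<Rightarrow> real set \<Rightarrow> bool" where
  "gpav_outcome n c \<alpha> R A \<longleftrightarrow> is_cake_allocation c \<alpha> A \<and>
     (\<forall>B. is_cake_allocation c \<alpha> B \<longrightarrow>
        (\<Sum>i\<in>{1..n}. gen_harmonic (cake_util (R i) B))
          \<le> (\<Sum>i\<in>{1..n}. gen_harmonic (cake_util (R i) A)))"

definition t_cohesive :: "nat \<Rightarrow> real \<Rightarrow> (nat \<Rightarrow> real set) \<Rightarrow> real \<Rightarrow> nat set \<Rightarrow> bool" where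
  "t_cohesive n \<alpha> R t S \<longleftrightarrow> S \<subseteq> {1..n} \<and> real (card S) \<ge> t * real n / \<alpha> \<and>
     len (\<Inter>i\<in>S. R i) \<ge> t"

definition cake_EJR :: "nat \<Rightarrow> real \<Rightarrow> (nat \<Rightarrow> real set) \<Rightarrow> real set \<Rightarrow> bool" where
  "cake_EJR n \<alpha> R A \<longleftrightarrow>
     (\<forall>t>0. \<forall>S. t_cohesive n \<alpha> R t S \<longrightarrow> (\<exists>j\<in>S. cake_util (R j) A \<ge> t))"

end

theory Submission
  imports Defs
begin

lemma term_ineq:
  fixes x u w :: real
  assumes x: "x \<ge> 1" and u: "u \<ge> 0" and w: "w \<ge> 0" and uw: "u + w \<le> 1/4"
  shows "2 * (u / (x * (u + x))) + w / (x * (w + x)) \<le> 2 * ((1/4) / (x * (1/4 + x)))"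
proof -
  define a :: real where "a = 1/4"
  have e: "\<And>y. y \<ge> 0 \<Longrightarrow> y / (x * (y + x)) = 1/x - 1/(y+x)"
    using x by (simp add: field_simps)
  have s1: "u / (x * (u + x)) \<le> (a - w) / (x * ((a - w) + x))"
    using e[of u] e[of "a-w"] u uw x unfolding a_def
    by (simp add: frac_le)
  have s2: "w / (x * (w + x)) \<le> w / x^2"
    using x w by (simp add: power2_eq_square frac_le mult_left_mono)
  have xx: "x * 1 \<le> x * x" using x by (intro mult_left_mono) auto
  have ex: "(a+x)^2 = x*x + x/2 + 1/16" by (simp add: a_def power2_eq_square algebra_simps)
  have sq: "(a + x)^2 \<le> 2 * x^2"
  proof -
    have h: "x*x + x/2 + 1/16 \<le> 2*x^2" unfolding power2_eq_square using x xx by linarith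
    show ?thesis using h ex by linarith
  qed
  have s3: "w / x^2 \<le> 2 * w / (a+x)^2"
  proof -
    have "w / x^2 = 2*w / (2*x^2)" by simp
    also have "\<dots> \<le> 2 * w / (a+x)^2"
      using sq w x unfolding a_def by (intro divide_left_mono) (auto simp: power2_eq_square)
    finally show ?thesis .
  qed
  have d: "a / (x * (a + x)) - (a - w) / (x * ((a - w) + x)) = w / ((a - w + x) * (a + x))"
  proof -
    have p1: "a - w + x > 0" "a + x > 0" using x w uw u unfolding a_def by auto
    have "a / (x * (a + x)) - (a - w) / (x * ((a - w) + x)) = 1/(a - w + x) - 1/(a+x)"
      using e[of a] e[of "a-w"] uw u unfolding a_def by simp
    also have "\<dots> = w / ((a - w + x) * (a + x))" using p1 by (simp add: field_simps)
    finally show ?thesis .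
  qed
  have s4: "w / (a+x)^2 \<le> w / ((a - w + x) * (a + x))"
    using x w uw u unfolding a_def
    by (intro divide_left_mono) (auto simp: power2_eq_square intro!: mult_right_mono mult_pos_pos)
  show ?thesis using s1 s2 s3 s4 d unfolding a_def by linarith
qed

lemma summable_terms:
  assumes "y \<ge> 0"
  shows "summable (\<lambda>k. y / (real (Suc k) * (y + real (Suc k))))"
proof (rule summable_comparison_test')
  show "summable (\<lambda>k. y * inverse (real (Suc k) ^ 2))"
  proof (intro summable_mult)
    show "summable (\<lambda>k. inverse (real (Suc k) ^ 2))"
      by (subst summable_Suc_iff) (rule inverse_power_summable, simp)
  qed
  fix k :: nat
  show "norm (y / (real (Suc k) * (y + real (Suc k)))) \<le> y * inverse (real (Suc k) ^ 2)"
  proof -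
    have p: "real (Suc k) > 0" by simp
    have "y / (real (Suc k) * (y + real (Suc k))) \<le> y / (real (Suc k) * real (Suc k))"
      using assms p by (intro divide_left_mono mult_left_mono) auto
    thus ?thesis using assms by (simp add: power2_eq_square divide_inverse)
  qed
qed

lemma H_ineq:
  fixes u w :: real
  assumes u: "u \<ge> 0" and w: "w \<ge> 0" and uw: "u + w \<le> 1/4"
  shows "gen_harmonic u + gen_harmonic u + gen_harmonic w \<le> 2 * gen_harmonic (1/4)"
proof -
  let ?f = "\<lambda>y k. y / (real (Suc k) * (y + real (Suc k)))"
  have su: "summable (?f u)" and sw: "summable (?f w)" and sa: "summable (?f (1/4))"
    using summable_terms[of u] summable_terms[of w] summable_terms[of "1/4"] u w by auto
  have "gen_harmonic u + gen_harmonic u + gen_harmonic w = (\<Sum>k. 2 * ?f u k + ?f w k)"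
  proof -
    have "(\<Sum>k. 2 * ?f u k + ?f w k) = (\<Sum>k. 2 * ?f u k) + (\<Sum>k. ?f w k)"
      by (rule suminf_add[OF summable_mult[OF su] sw, symmetric])
    also have "(\<Sum>k. 2 * ?f u k) = 2 * (\<Sum>k. ?f u k)" by (rule suminf_mult[OF su])
    finally show ?thesis unfolding gen_harmonic_def by simp
  qed
  also have "\<dots> \<le> (\<Sum>k. 2 * ?f (1/4) k)"
  proof (rule suminf_le)
    show "2 * ?f u k + ?f w k \<le> 2 * ?f (1/4) k" for k
      using term_ineq[of "real (Suc k)" u w] u w uw by simp
    show "summable (\<lambda>k. 2 * ?f u k + ?f w k)" using su sw by (intro summable_add summable_mult)
    show "summable (\<lambda>k. 2 * ?f (1/4) k)" using sa by (intro summable_mult)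
  qed
  also have "\<dots> = 2 * gen_harmonic (1/4)" unfolding gen_harmonic_def by (rule suminf_mult[OF sa])
  finally show ?thesis .
qed

lemma piece_Icc: "0 \<le> a \<Longrightarrow> a \<le> b \<Longrightarrow> b \<le> c \<Longrightarrow> is_piece c {a..b}"
  unfolding is_piece_def by (rule exI[of _ "{(a,b)}"]) (auto simp: disjoint_family_on_def)

lemma piece_compact:
  assumes "is_piece c B" shows "compact B" "B \<subseteq> {0..c}"
proof -
  obtain I where I: "finite I" "\<forall>(a,b)\<in>I. 0 \<le> a \<and> a \<le> b \<and> b \<le> c"
    "B = (\<Union>(a,b)\<in>I. {a..b::real})"
    using assms unfolding is_piece_def by blast
  show "compact B" unfolding I(3) using I(1) by (intro compact_UN) auto
  show "B \<subseteq> {0..c}" using I(2,3) by auto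
qed

theorem mainTheorem12:
  shows "\<exists>(n::nat) (c::real) (\<alpha>::real) (R::nat \<Rightarrow> real set) (A::real set).
           n \<ge> 1 \<and> c > 0 \<and> 0 < \<alpha> \<and> \<alpha> \<le> c \<and>
           (\<forall>i\<in>{1..n}. is_piece c (R i)) \<and>
           gpav_outcome n c \<alpha> R A \<and> \<not> cake_EJR n \<alpha> R A"
proof -
  define R :: "nat \<Rightarrow> real set" where "R = (\<lambda>i. if i = 3 then {3/2..2} else {0..1})"
  define A :: "real set" where "A = {0..1/4}"
  have R1: "R 1 = {0..1}" "R 2 = {0..1}" "R 3 = {3/2..2}" by (auto simp: R_def)
  have s3: "{1..3::nat} = {1,2,3}" by auto
  have H0: "gen_harmonic 0 = 0" by (simp add: gen_harmonic_def)
  have pieces: "\<forall>i\<in>{1..3}. is_piece 2 (R i)"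
    by (auto simp: R_def intro: piece_Icc)
  have Aalloc: "is_cake_allocation 2 (1/4) A"
    unfolding is_cake_allocation_def A_def len_def by (auto intro: piece_Icc)
  have "R 1 \<inter> A = {0..1/4}" "R 2 \<inter> A = {0..1/4}" by (auto simp: R_def A_def)
  hence uA1: "cake_util (R 1) A = 1/4" "cake_util (R 2) A = 1/4"
    by (simp_all add: cake_util_def len_def)
  have "R 3 \<inter> A = {}" by (auto simp: R_def A_def)
  hence uA3: "cake_util (R 3) A = 0" by (simp add: cake_util_def len_def)
  have gpav: "gpav_outcome 3 2 (1/4) R A"
    unfolding gpav_outcome_def
  proof (intro conjI allI impI Aalloc)
    fix B assume "is_cake_allocation 2 (1/4) B"
    hence pB: "is_piece 2 B" and lB: "measure lborel B \<le> 1/4"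
      unfolding is_cake_allocation_def len_def by auto
    have cB: "compact B" using piece_compact[OF pB] by simp
    have f1: "R 1 \<inter> B \<in> fmeasurable lborel" and f3: "R 3 \<inter> B \<in> fmeasurable lborel"
      and fB: "B \<in> fmeasurable lborel"
    proof -
      have e1: "R 1 \<inter> B = B \<inter> {0..1}" and e3: "R 3 \<inter> B = B \<inter> {3/2..2}" by (auto simp: R_def)
      have c1: "compact (B \<inter> {0..1})" using compact_Int_closed[OF cB closed_atLeastAtMost] .
      have c3: "compact (B \<inter> {3/2..2::real})" using compact_Int_closed[OF cB closed_atLeastAtMost] .
      show "R 1 \<inter> B \<in> fmeasurable lborel" unfolding e1 by (rule fmeasurable_compact[OF c1])
      show "R 3 \<inter> B \<in> fmeasurable lborel" unfolding e3 by (rule fmeasurable_compact[OF c3])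
      show "B \<in> fmeasurable lborel" by (rule fmeasurable_compact[OF cB])
    qed
    define u where "u = measure lborel (R 1 \<inter> B)"
    define w where "w = measure lborel (R 3 \<inter> B)"
    have "u + w = measure lborel ((R 1 \<inter> B) \<union> (R 3 \<inter> B))"
      unfolding u_def w_def using f1 f3
      by (intro measure_Union[symmetric]) (auto simp: R_def fmeasurable_def)
    also have "\<dots> \<le> measure lborel B"
      using fB f1 f3 by (intro measure_mono_fmeasurable) (auto simp: fmeasurable_def)
    finally have uw: "u + w \<le> 1/4" using lB by linarith
    have "(\<Sum>i\<in>{1..3}. gen_harmonic (cake_util (R i) B)) = gen_harmonic u + gen_harmonic u + gen_harmonic w"
      unfolding s3 by (simp add: cake_util_def len_def u_def w_def R_def)
    also have "\<dots> \<le> 2 * gen_harmonic (1/4)"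
      by (rule H_ineq[OF _ _ uw]) (simp_all add: u_def w_def)
    also have "\<dots> = (\<Sum>i\<in>{1..3}. gen_harmonic (cake_util (R i) A))"
    proof -
      have g: "gen_harmonic (cake_util (R (Suc 0)) A) = gen_harmonic (1/4)"
        "gen_harmonic (cake_util (R 2) A) = gen_harmonic (1/4)"
        using uA1 by (simp_all only: One_nat_def)
      show ?thesis unfolding s3 by (simp add: g uA3 H0)
    qed
    finally show "(\<Sum>i\<in>{1..3}. gen_harmonic (cake_util (R i) B)) \<le> (\<Sum>i\<in>{1..3}. gen_harmonic (cake_util (R i) A))" .
  qed
  have notEJR: "\<not> cake_EJR 3 (1/4) R A"
    unfolding cake_EJR_def
  proof
    assume h: "\<forall>t>0. \<forall>S. t_cohesive 3 (1/4) R t S \<longrightarrow> (\<exists>j\<in>S. cake_util (R j) A \<ge> t)"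
    have "t_cohesive 3 (1/4) R (1/12) {3}"
      unfolding t_cohesive_def len_def by (simp add: R1)
    hence "\<exists>j\<in>{3}. cake_util (R j) A \<ge> 1/12" using h[rule_format, of "1/12" "{3}"] by simp
    thus False using uA3 by simp
  qed
  show ?thesis
    by (rule exI[of _ 3], rule exI[of _ 2], rule exI[of _ "1/4"], rule exI[of _ R], rule exI[of _ A])
       (use pieces gpav notEJR in auto)
qed

end
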